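(* There is $d_0$ such that the following holds for all $d\geq d_0$. Let $G$ be a graph on $n$ vertices with average degree $d$. Then there exists a non-empty bipartite subgraph $G''$ of $G$ with parts $X$ and $Y$ such that $d_{G''}(x)\geq\frac{\Delta(G'')}{160}$ for every $x\in X$, and $d_{G''}(y)\geq\frac{d}{20\log n}$ for every $y\in Y$.
   Context: $d_{G''}(v)$ is the degree of $v$ in $G''$ and $\Delta(G'')$ the maximum degree of $G''$. Logarithms are base $2$. *)

theory Defs
  imports Complex_Main
begin

definition simple_graph :: "'a set \<Rightarrow> ('a \<Rightarrow> 'a \<Rightarrow> bool) \<Rightarrow> bool" where
  "simple_graph V E \<longleftrightarrow> finite V \<and>
     (\<forall>x y. E x y \<longrightarrow> x \<in> V \<and> y \<in> V) \<and>
     (\<forall>x y. E x y \<longrightarrow> E y x) \<and> (\<forall>x. \<not> E x x)"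

definition degree :: "'a set \<Rightarrow> ('a \<Rightarrow> 'a \<Rightarrow> bool) \<Rightarrow> 'a \<Rightarrow> nat" where
  "degree V E v = card {u \<in> V. E v u}"

definition avg_degree :: "'a set \<Rightarrow> ('a \<Rightarrow> 'a \<Rightarrow> bool) \<Rightarrow> real" where
  "avg_degree V E = (\<Sum>v\<in>V. real (degree V E v)) / real (card V)"

definition max_degree :: "'a set \<Rightarrow> ('a \<Rightarrow> 'a \<Rightarrow> bool) \<Rightarrow> nat" where
  "max_degree V E = Max (insert 0 (degree V E ` V))"

definition subgraph :: "'a set \<Rightarrow> ('a \<Rightarrow> 'a \<Rightarrow> bool) \<Rightarrow> 'a set \<Rightarrow> ('a \<Rightarrow> 'a \<Rightarrow> bool) \<Rightarrow> bool" where
  "subgraph V' E' V E \<longleftrightarrow> simple_graph V' E' \<and> V' \<subseteq> V \<and> (\<forall>x y. E' x y \<longrightarrow> E x y)"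

definition bipartite_parts :: "'a set \<Rightarrow> ('a \<Rightarrow> 'a \<Rightarrow> bool) \<Rightarrow> 'a set \<Rightarrow> 'a set \<Rightarrow> bool" where
  "bipartite_parts V E X Y \<longleftrightarrow> X \<inter> Y = {} \<and> X \<union> Y = V \<and>
     (\<forall>x y. E x y \<longrightarrow> (x \<in> X \<and> y \<in> Y) \<or> (x \<in> Y \<and> y \<in> X))"

end

theory Submission
  imports Defs "HOL-Library.Discrete_Functions"
begin

lemma card_sum:
  assumes "finite A"
  shows "real (card {y\<in>A. Q y}) = (\<Sum>y\<in>A. of_bool (Q y))"
  using assms by (simp add: Int_def)

lemma peel:
  fixes X Y :: "'a set" and R :: "'a \<Rightarrow> 'a \<Rightarrow> bool" and a t :: real
  assumes fX: "finite X" and fY: "finite Y" and a0: "a \<ge> 0" and t0: "t \<ge> 0"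
    and big: "(\<Sum>x\<in>X. \<Sum>y\<in>Y. of_bool (R x y)) > real (card X) * a + real (card Y) * t"
  shows "\<exists>X'\<subseteq>X. \<exists>Y'\<subseteq>Y. (\<exists>x\<in>X'. \<exists>y\<in>Y'. R x y) \<and>
     (\<forall>x\<in>X'. (\<Sum>y\<in>Y'. of_bool (R x y)) \<ge> a) \<and> (\<forall>y\<in>Y'. (\<Sum>x\<in>X'. of_bool (R x y)) \<ge> t)"
proof -
  define \<phi> where "\<phi> P = (\<Sum>x\<in>fst P. \<Sum>y\<in>snd P. (of_bool (R x y)::real)) - real (card (fst P)) * a - real (card (snd P)) * t" for P
  define Q where "Q = Pow X \<times> Pow Y"
  have fQ: "finite Q" using fX fY by (simp add: Q_def)
  have XYQ: "(X, Y) \<in> Q" by (simp add: Q_def)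
  obtain P0 where P0: "P0 \<in> Q" "\<phi> P0 = Max (\<phi> ` Q)"
    using Max_in[of "\<phi> ` Q"] fQ XYQ by (metis empty_iff finite_imageI image_iff image_is_empty)
  have maxP: "\<phi> P \<le> \<phi> P0" if "P \<in> Q" for P
    using P0 fQ that by simp
  obtain X' Y' where XY': "P0 = (X', Y')" by (cases P0)
  have sub: "X' \<subseteq> X" "Y' \<subseteq> Y" using P0 XY' by (auto simp: Q_def)
  have fX': "finite X'" and fY': "finite Y'" using sub fX fY finite_subset by auto
  have "\<phi> (X, Y) > 0" using big by (simp add: \<phi>_def del: sum_of_bool_eq)
  hence pos: "\<phi> P0 > 0" using maxP[OF XYQ] by simp
  have epos: "(\<Sum>x\<in>X'. \<Sum>y\<in>Y'. (of_bool (R x y)::real)) > 0"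
    using pos a0 t0 unfolding \<phi>_def XY' fst_conv snd_conv
    by (smt (verit) mult_nonneg_nonneg of_nat_0_le_iff)
  have ex: "\<exists>x\<in>X'. \<exists>y\<in>Y'. R x y"
  proof (rule ccontr)
    assume "\<not> ?thesis"
    hence "(\<Sum>x\<in>X'. \<Sum>y\<in>Y'. (of_bool (R x y)::real)) = 0" by (simp del: sum_of_bool_eq)
    thus False using epos by simp
  qed
  have degX: "(\<Sum>y\<in>Y'. of_bool (R x y)) \<ge> a" if x: "x \<in> X'" for x
  proof (rule ccontr)
    assume lt: "\<not> ?thesis"
    have Q1: "(X' - {x}, Y') \<in> Q" using sub by (auto simp: Q_def)
    have s: "(\<Sum>z\<in>X'. \<Sum>y\<in>Y'. (of_bool (R z y)::real)) = (\<Sum>y\<in>Y'. of_bool (R x y)) + (\<Sum>z\<in>X'-{x}. \<Sum>y\<in>Y'. (of_bool (R z y)::real))"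
      using sum.remove[OF fX' x] by blast
    have c: "real (card X') = real (card (X' - {x})) + 1"
      using card.remove[OF fX' x] by simp
    have "\<phi> (X' - {x}, Y') > \<phi> P0"
      using lt s c unfolding \<phi>_def XY' fst_conv snd_conv by (simp del: sum_of_bool_eq add: algebra_simps)
    thus False using maxP[OF Q1] by simp
  qed
  have degY: "(\<Sum>x\<in>X'. of_bool (R x y)) \<ge> t" if y: "y \<in> Y'" for y
  proof (rule ccontr)
    assume lt: "\<not> ?thesis"
    have Q1: "(X', Y' - {y}) \<in> Q" using sub by (auto simp: Q_def)
    have s: "(\<Sum>z\<in>X'. \<Sum>w\<in>Y'. (of_bool (R z w)::real)) = (\<Sum>z\<in>X'. of_bool (R z y)) + (\<Sum>z\<in>X'. \<Sum>w\<in>Y'-{y}. (of_bool (R z w)::real))"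
      by (simp only: sum.remove[OF fY' y] sum.distrib)
    have c: "real (card Y') = real (card (Y' - {y})) + 1"
      using card.remove[OF fY' y] by simp
    have "\<phi> (X', Y' - {y}) > \<phi> P0"
      unfolding \<phi>_def XY' fst_conv snd_conv s c using lt by (simp only: distrib_right)
    thus False using maxP[OF Q1] by simp
  qed
  show ?thesis by (intro exI[where x=X'] exI[where x=Y'] conjI sub ex ballI degX degY)
qed
lemma maxcut:
  fixes V :: "'a set" and E :: "'a \<Rightarrow> 'a \<Rightarrow> bool"
  assumes fV: "finite V" and sym: "\<forall>x y. E x y \<longrightarrow> E y x" and irr: "\<forall>x. \<not> E x x"
  shows "\<exists>S. \<forall>v\<in>V. (\<Sum>w\<in>V. of_bool (E v w)::real) \<le> 2 * (\<Sum>w\<in>V. of_bool (E v w \<and> (v\<in>S) \<noteq> (w\<in>S)))"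
proof -
  define cut where "cut S = (\<Sum>u\<in>V. \<Sum>w\<in>V. (of_bool (E u w \<and> (u\<in>S) \<noteq> (w\<in>S))::real))" for S
  have fQ: "finite (Pow V)" using fV by simp
  obtain S0 where S0: "S0 \<in> Pow V" "cut S0 = Max (cut ` Pow V)"
    using Max_in[of "cut ` Pow V"] fQ by (metis Pow_bottom empty_iff finite_imageI image_iff image_is_empty)
  have maxS: "cut S \<le> cut S0" if "S \<in> Pow V" for S
    using S0 fQ that by simp
  have "(\<Sum>w\<in>V. of_bool (E v w)::real) \<le> 2 * (\<Sum>w\<in>V. of_bool (E v w \<and> (v\<in>S0) \<noteq> (w\<in>S0)))"
    if v: "v \<in> V" for v
  proof -
    define S' where "S' = (if v \<in> S0 then S0 - {v} else insert v S0)"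
    have S'P: "S' \<in> Pow V" using S0 v by (auto simp: S'_def)
    have mem: "(u \<in> S') = (if u = v then v \<notin> S0 else u \<in> S0)" for u
      by (auto simp: S'_def)
    define F where "F w = (of_bool (E v w)::real) - 2 * of_bool (E v w \<and> (v\<in>S0) \<noteq> (w\<in>S0))" for w
    have pt: "(of_bool (E u w \<and> (u\<in>S') \<noteq> (w\<in>S'))::real) - of_bool (E u w \<and> (u\<in>S0) \<noteq> (w\<in>S0))
       = (if u = v then F w else 0) + (if w = v then F u else 0)" for u w
      using sym irr unfolding F_def mem by (cases "u = v"; cases "w = v"; auto)
    have "cut S' - cut S0 = (\<Sum>u\<in>V. \<Sum>w\<in>V. ((if u = v then F w else 0) + (if w = v then F u else 0)))"
      unfolding cut_def pt[symmetric] by (simp only: sum_subtractf)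
    also have "\<dots> = (\<Sum>u\<in>V. \<Sum>w\<in>V. (if u = v then F w else 0)) + (\<Sum>u\<in>V. \<Sum>w\<in>V. (if w = v then F u else 0))"
      by (simp only: sum.distrib)
    also have "(\<Sum>u\<in>V. \<Sum>w\<in>V. (if u = v then F w else 0)) = (\<Sum>u\<in>V. if u = v then sum F V else 0)"
      by (rule sum.cong) auto
    also have "\<dots> = sum F V" using v fV by (simp add: sum.delta)
    also have "(\<Sum>u\<in>V. \<Sum>w\<in>V. (if w = v then F u else 0)) = sum F V"
      by (rule sum.cong) (auto simp: sum.delta v fV)
    also have "sum F V + sum F V = 2 * (\<Sum>w\<in>V. F w)" by simp
    finally have "cut S' - cut S0 = 2 * (\<Sum>w\<in>V. F w)" .
    moreover have "cut S' \<le> cut S0" using maxS[OF S'P] .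
    ultimately have "(\<Sum>w\<in>V. F w) \<le> 0" by simp
    thus ?thesis unfolding F_def by (simp only: sum_subtractf sum_distrib_left[symmetric])
  qed
  thus ?thesis by blast
qed

theorem lemma4p3:
  shows "\<exists>d0::real. \<forall>(V::nat set) E d. simple_graph V E \<and> V \<noteq> {} \<and>
           d = avg_degree V E \<and> d \<ge> d0 \<longrightarrow>
           (\<exists>V'' E'' X Y. subgraph V'' E'' V E \<and> (\<exists>x y. E'' x y) \<and>
              bipartite_parts V'' E'' X Y \<and>
              (\<forall>x\<in>X. real (degree V'' E'' x) \<ge> real (max_degree V'' E'') / 160) \<and>
              (\<forall>y\<in>Y. real (degree V'' E'' y) \<ge> d / (20 * log 2 (real (card V)))))"
proof (intro exI[of _ 1] allI impI)
  fix V :: "nat set" and E d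
  assume H: "simple_graph V E \<and> V \<noteq> {} \<and> d = avg_degree V E \<and> d \<ge> 1"
  have fV: "finite V" and inV: "\<forall>x y. E x y \<longrightarrow> x\<in>V \<and> y\<in>V" and sym: "\<forall>x y. E x y \<longrightarrow> E y x"
    and irr: "\<forall>x. \<not> E x x" using H by (auto simp: simple_graph_def)
  have Vne: "V \<noteq> {}" and d_def: "d = avg_degree V E" and d1: "d \<ge> 1" using H by auto
  define n where "n = card V"
  have n0: "n > 0" using fV Vne by (simp add: n_def card_gt_0_iff)
  have degsum: "(\<Sum>v\<in>V. real (degree V E v)) = real n * d"
    using d_def n0 by (simp add: avg_degree_def n_def)
  have degle: "degree V E v \<le> n - 1" if v: "v \<in> V" for v
  proof -
    have "{u\<in>V. E v u} \<subseteq> V - {v}" using irr by auto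
    hence "card {u\<in>V. E v u} \<le> card (V - {v})" using fV by (intro card_mono) auto
    thus ?thesis using v fV by (simp add: degree_def n_def card_Diff_singleton)
  qed
  have "real n * d \<le> real n * (real n - 1)"
  proof -
    have "(\<Sum>v\<in>V. real (degree V E v)) \<le> (\<Sum>v\<in>V. real n - 1)"
    proof (intro sum_mono)
      fix v assume "v \<in> V"
      hence "degree V E v + 1 \<le> n" using degle n0 by fastforce
      hence "real (degree V E v) + 1 \<le> real n" by (metis of_nat_1 of_nat_add of_nat_le_iff)
      thus "real (degree V E v) \<le> real n - 1" by linarith
    qed
    thus ?thesis using degsum by (simp add: n_def)
  qed
  hence dn: "d \<le> real n - 1" using n0 by simp
  hence n2: "real n \<ge> 2" using d1 by simp
  have lg: "log 2 (real n) \<ge> 1" using n2 by simp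
  obtain S where S: "\<forall>v\<in>V. (\<Sum>w\<in>V. of_bool (E v w)::real) \<le> 2 * (\<Sum>w\<in>V. of_bool (E v w \<and> (v\<in>S) \<noteq> (w\<in>S)))"
    using maxcut[OF fV] sym irr by blast
  define c where "c v = card {w\<in>V. E v w \<and> (v\<in>S) \<noteq> (w\<in>S)}" for v
  have deg_c: "real (degree V E v) \<le> 2 * real (c v)" if "v \<in> V" for v
    using S that unfolding degree_def c_def card_sum[OF fV] by blast
  define cls where "cls v = floor_log (c v)" for v
  have c_lt: "c v < 2 * 2 ^ cls v" for v unfolding cls_def by (rule floor_log_exp2_gt)
  have c_ge: "2 ^ cls v \<le> c v" if "0 < c v" for v unfolding cls_def using floor_log_exp2_le that by blast
  have c_le_n: "c v \<le> n" for v unfolding c_def n_def using fV by (intro card_mono) auto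
  define a where "a x = card {y\<in>V. E x y \<and> (x\<in>S) \<noteq> (y\<in>S) \<and> c y < 2 * 2 ^ cls x}" for x
  have a_le_c: "a x \<le> c x" for x unfolding a_def c_def using fV by (intro card_mono) auto
  have sumA: "(\<Sum>x\<in>V. real (c x)) \<le> 2 * (\<Sum>x\<in>V. real (a x))"
  proof -
    define Pa where "Pa x y = (E x y \<and> (x\<in>S) \<noteq> (y\<in>S) \<and> c y < 2 * 2 ^ cls x)" for x y
    have ra: "real (a x) = (\<Sum>y\<in>V. of_bool (Pa x y))" for x
      unfolding a_def Pa_def card_sum[OF fV] ..
    have rc: "real (c x) = (\<Sum>y\<in>V. of_bool (E x y \<and> (x\<in>S) \<noteq> (y\<in>S)))" for x
      unfolding c_def card_sum[OF fV] ..
    have pt: "(of_bool (E x y \<and> (x\<in>S) \<noteq> (y\<in>S)) :: real) \<le> of_bool (Pa x y) + of_bool (Pa y x)" for x y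
    proof (cases "E x y \<and> (x\<in>S) \<noteq> (y\<in>S)")
      case True
      hence "E y x \<and> (y\<in>S) \<noteq> (x\<in>S)" using sym by auto
      moreover have "c y < 2 * 2 ^ cls x \<or> c x < 2 * 2 ^ cls y"
        using c_lt[of x] c_lt[of y] by linarith
      ultimately show ?thesis using True unfolding Pa_def by auto
    qed simp
    have "(\<Sum>x\<in>V. real (c x)) \<le> (\<Sum>x\<in>V. \<Sum>y\<in>V. (of_bool (Pa x y) + of_bool (Pa y x)::real))"
      unfolding rc by (intro sum_mono pt)
    also have "\<dots> = (\<Sum>x\<in>V. \<Sum>y\<in>V. (of_bool (Pa x y)::real)) + (\<Sum>x\<in>V. \<Sum>y\<in>V. (of_bool (Pa y x)::real))"
      by (simp only: sum.distrib)
    also have "(\<Sum>x\<in>V. \<Sum>y\<in>V. (of_bool (Pa y x)::real)) = (\<Sum>x\<in>V. \<Sum>y\<in>V. (of_bool (Pa x y)::real))"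
      by (rule sum.swap)
    finally show ?thesis unfolding ra by simp
  qed
  define L where "L = floor_log n"
  have cls_le: "cls v \<le> L" for v unfolding cls_def L_def by (rule floor_log_le_iff[OF c_le_n])
  have L_log: "real L \<le> log 2 (real n)"
  proof -
    have "2 ^ L \<le> n" unfolding L_def using floor_log_exp2_le n0 by blast
    hence "real (2 ^ L) \<le> real n" by linarith
    hence "log 2 (2 ^ L) \<le> log 2 (real n)" using n0 by (subst log_le_cancel_iff) auto
    thus ?thesis by (simp add: log_nat_power)
  qed
  define t where "t = d / (20 * log 2 (real (card V)))"
  have t0: "t \<ge> 0" using d1 lg by (simp add: t_def n_def)
  define g where "g x = real (a x) - real (c x) / 80" for x
  define V' where "V' = {x\<in>V. 0 < c x}"
  define f where "f x = (cls x, x \<in> S)" for x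
  define T where "T = {0..L} \<times> (UNIV :: bool set)"
  have fT: "finite T" by (simp add: T_def)
  have cardT: "card T = 2 * (L + 1)" by (simp add: T_def card_cartesian_product)
  have fV': "finite V'" using fV by (simp add: V'_def)
  have grp: "(\<Sum>F\<in>T. \<Sum>x\<in>{x\<in>V'. f x = F}. g x) = (\<Sum>x\<in>V'. g x)"
    by (rule sum.group[OF fV' fT]) (auto simp: f_def T_def cls_le)
  have VV': "(\<Sum>x\<in>V'. g x) = (\<Sum>x\<in>V. g x)"
  proof (rule sum.mono_neutral_left[OF fV])
    show "V' \<subseteq> V" by (auto simp: V'_def)
    show "\<forall>i\<in>V - V'. g i = 0" using a_le_c by (auto simp: V'_def g_def) (metis le_zero_eq not_gr0)
  qed
  have sumdeg: "real n * d \<le> 2 * (\<Sum>x\<in>V. real (c x))"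
  proof -
    have "(\<Sum>v\<in>V. real (degree V E v)) \<le> (\<Sum>v\<in>V. 2 * real (c v))" by (intro sum_mono deg_c)
    thus ?thesis using degsum by (simp add: sum_distrib_left)
  qed
  have sumg: "(\<Sum>x\<in>V. g x) \<ge> 39 / 160 * (real n * d)"
  proof -
    have "(\<Sum>x\<in>V. g x) = (\<Sum>x\<in>V. real (a x)) - (\<Sum>x\<in>V. real (c x)) / 80"
      by (simp add: g_def sum_subtractf sum_divide_distrib)
    thus ?thesis using sumA sumdeg by linarith
  qed
  have nd0: "real n * d > 0" using n0 d1 by simp
  have Ybound: "2 * (real L + 1) * (real n * t) \<le> real n * d / 5"
  proof -
    have "2 * (real L + 1) * (real n * t) = (real L + 1) / log 2 (real n) * (real n * d) / 10"
      using lg by (simp add: t_def n_def field_simps)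
    also have "(real L + 1) / log 2 (real n) \<le> 2" using L_log lg by (simp add: divide_le_eq)
    hence "(real L + 1) / log 2 (real n) * (real n * d) / 10 \<le> 2 * (real n * d) / 10"
      using nd0 by (intro divide_right_mono mult_right_mono) auto
    finally show ?thesis by (simp add: mult.commute)
  qed
  obtain i s where iT: "(i, s) \<in> T" and big: "(\<Sum>x\<in>{x\<in>V'. f x = (i, s)}. g x) > real n * t"
  proof (rule ccontr)
    assume "\<not> thesis"
    have le: "\<forall>F\<in>T. (\<Sum>x\<in>{x\<in>V'. f x = F}. g x) \<le> real n * t"
    proof (intro ballI)
      fix F assume F: "F \<in> T"
      show "(\<Sum>x\<in>{x\<in>V'. f x = F}. g x) \<le> real n * t"
      proof (rule ccontr)
        assume "\<not> ?thesis"
        hence "(\<Sum>x\<in>{x\<in>V'. f x = (fst F, snd F)}. g x) > real n * t" by simp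
        thus False using that[of "fst F" "snd F"] F \<open>\<not> thesis\<close> by simp
      qed
    qed
    have "(\<Sum>F\<in>T. \<Sum>x\<in>{x\<in>V'. f x = F}. g x) \<le> (\<Sum>F\<in>T. real n * t)"
      using le by (intro sum_mono) auto
    also have "\<dots> = 2 * (real L + 1) * (real n * t)" using cardT by simp
    finally show False using grp VV' sumg Ybound nd0 by linarith
  qed
  define M where "M = (2::nat) * 2 ^ i"
  define X where "X = {x\<in>V'. f x = (i, s)}"
  define Y where "Y = {y\<in>V. (y\<in>S) \<noteq> s}"
  define R where "R x y = (E x y \<and> (x\<in>S) \<noteq> (y\<in>S) \<and> c y < M)" for x y
  have Xprop: "x\<in>V \<and> 0 < c x \<and> cls x = i \<and> (x\<in>S) = s" if "x \<in> X" for x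
    using that by (auto simp: X_def V'_def f_def)
  have fX: "finite X" using fV by (simp add: X_def V'_def)
  have fY: "finite Y" using fV by (simp add: Y_def)
  have XV: "X \<subseteq> V" and YV: "Y \<subseteq> V" using Xprop by (auto simp: Y_def)
  have XYd: "X \<inter> Y = {}" using Xprop by (auto simp: Y_def)
  have RE: "R x y \<Longrightarrow> E x y" for x y by (simp add: R_def)
  have rowsum: "(\<Sum>y\<in>Y. of_bool (R x y)) = real (a x)" if x: "x \<in> X" for x
  proof -
    have "(\<Sum>y\<in>Y. (of_bool (R x y)::real)) = (\<Sum>y\<in>V. if (y\<in>S) \<noteq> s then of_bool (R x y) else 0)"
      unfolding Y_def by (rule sum.inter_filter[OF fV])
    also have "\<dots> = (\<Sum>y\<in>V. of_bool (E x y \<and> (x\<in>S) \<noteq> (y\<in>S) \<and> c y < 2 * 2 ^ cls x))"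
      using Xprop[OF x] by (intro sum.cong) (auto simp: R_def M_def)
    also have "\<dots> = real (a x)" unfolding a_def card_sum[OF fV] ..
    finally show ?thesis .
  qed
  have Xcost: "real (card X) * (real M / 160) \<le> (\<Sum>x\<in>X. real (c x)) / 80"
  proof -
    have "real (card X) * (real M / 160) = (\<Sum>x\<in>X. real M / 160)" by simp
    also have "\<dots> \<le> (\<Sum>x\<in>X. real (c x) / 80)"
    proof (intro sum_mono)
      fix x assume x: "x \<in> X"
      have "2 ^ i \<le> c x" using c_ge[of x] Xprop[OF x] by auto
      hence "M \<le> 2 * c x" by (simp add: M_def)
      hence "real M \<le> 2 * real (c x)" by linarith
      thus "real M / 160 \<le> real (c x) / 80" by simp
    qed
    also have "\<dots> = (\<Sum>x\<in>X. real (c x)) / 80" by (simp add: sum_divide_distrib)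
    finally show ?thesis .
  qed
  have cardY: "card Y \<le> n" unfolding n_def using fV YV by (rule card_mono)
  have total: "(\<Sum>x\<in>X. \<Sum>y\<in>Y. of_bool (R x y)) > real (card X) * (real M / 160) + real (card Y) * t"
  proof -
    have "(\<Sum>x\<in>X. \<Sum>y\<in>Y. (of_bool (R x y)::real)) = (\<Sum>x\<in>X. real (a x))"
      by (rule sum.cong) (simp_all only: rowsum)
    also have "\<dots> = (\<Sum>x\<in>X. g x) + (\<Sum>x\<in>X. real (c x)) / 80"
      by (simp add: g_def sum_subtractf sum_divide_distrib)
    finally have e: "(\<Sum>x\<in>X. \<Sum>y\<in>Y. (of_bool (R x y)::real)) = (\<Sum>x\<in>X. g x) + (\<Sum>x\<in>X. real (c x)) / 80" .
    have "real (card Y) * t \<le> real n * t" using cardY t0 by (intro mult_right_mono) auto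
    moreover have "(\<Sum>x\<in>X. g x) > real n * t" using big by (simp add: X_def)
    ultimately show ?thesis using e Xcost by linarith
  qed
  have M0: "real M / 160 \<ge> 0" by simp
  obtain X' Y' where sub: "X' \<subseteq> X" "Y' \<subseteq> Y" and ex: "\<exists>x\<in>X'. \<exists>y\<in>Y'. R x y"
    and dX: "\<forall>x\<in>X'. (\<Sum>y\<in>Y'. of_bool (R x y)) \<ge> real M / 160"
    and dY: "\<forall>y\<in>Y'. (\<Sum>x\<in>X'. of_bool (R x y)) \<ge> t"
    using peel[OF fX fY M0 t0 total] by blast
  have fX': "finite X'" and fY': "finite Y'" using sub fX fY finite_subset by auto
  have XYd': "X' \<inter> Y' = {}" using sub XYd by auto
  define V'' where "V'' = X' \<union> Y'"
  define E'' where "E'' u w = ((u\<in>X' \<and> w\<in>Y' \<and> R u w) \<or> (u\<in>Y' \<and> w\<in>X' \<and> R w u))" for u w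
  have degX: "{u\<in>V''. E'' x u} = {u\<in>Y'. R x u}" if "x \<in> X'" for x
    using that XYd' by (auto simp: V''_def E''_def)
  have degY: "{u\<in>V''. E'' y u} = {u\<in>X'. R u y}" if "y \<in> Y'" for y
    using that XYd' by (auto simp: V''_def E''_def)
  have V''V: "V'' \<subseteq> V" using sub XV YV by (auto simp: V''_def)
  have fV'': "finite V''" using fX' fY' by (simp add: V''_def)
  have deg_le: "degree V'' E'' v \<le> M" if v: "v \<in> V''" for v
  proof (cases "\<exists>u\<in>V''. E'' v u")
    case True
    then obtain u where "E'' v u" by blast
    hence cv: "c v < M"
    proof (unfold E''_def, elim disjE conjE)
      assume "v \<in> X'" thus "c v < M" using Xprop[of v] sub c_lt[of v] by (auto simp: M_def)
    next
      assume "R u v" thus "c v < M" by (simp add: R_def)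
    qed
    have "{u\<in>V''. E'' v u} \<subseteq> {w\<in>V. E v w \<and> (v\<in>S) \<noteq> (w\<in>S)}"
      using V''V sym by (auto simp: E''_def R_def)
    hence "card {u\<in>V''. E'' v u} \<le> c v" unfolding c_def using fV by (intro card_mono) auto
    thus ?thesis using cv by (simp add: degree_def)
  next
    case False
    hence e: "{u\<in>V''. E'' v u} = {}" by auto
    show ?thesis unfolding degree_def e by simp
  qed
  have maxd: "max_degree V'' E'' \<le> M"
    unfolding max_degree_def using fV'' deg_le by (subst Max_le_iff) auto
  show "\<exists>V'' E'' X Y. subgraph V'' E'' V E \<and> (\<exists>x y. E'' x y) \<and>
              bipartite_parts V'' E'' X Y \<and>
              (\<forall>x\<in>X. real (degree V'' E'' x) \<ge> real (max_degree V'' E'') / 160) \<and>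
              (\<forall>y\<in>Y. real (degree V'' E'' y) \<ge> d / (20 * log 2 (real (card V))))"
  proof (rule exI[of _ V''], rule exI[of _ E''], rule exI[of _ X'], rule exI[of _ Y'], intro conjI)
    show "subgraph V'' E'' V E"
      unfolding subgraph_def simple_graph_def
      using fV'' V''V XYd' sym by (auto simp: E''_def V''_def R_def)
    show "\<exists>x y. E'' x y" using ex by (auto simp: E''_def)
    show "bipartite_parts V'' E'' X' Y'"
      unfolding bipartite_parts_def using XYd' by (auto simp: E''_def V''_def)
    show "\<forall>x\<in>X'. real (degree V'' E'' x) \<ge> real (max_degree V'' E'') / 160"
    proof
      fix x assume x: "x \<in> X'"
      have "real (degree V'' E'' x) = (\<Sum>y\<in>Y'. of_bool (R x y))"
        unfolding degree_def degX[OF x] card_sum[OF fY'] ..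
      hence "real (degree V'' E'' x) \<ge> real M / 160" using dX x by simp
      moreover have "real (max_degree V'' E'') \<le> real M" using maxd by simp
      ultimately show "real (degree V'' E'' x) \<ge> real (max_degree V'' E'') / 160" by linarith
    qed
    show "\<forall>y\<in>Y'. real (degree V'' E'' y) \<ge> d / (20 * log 2 (real (card V)))"
    proof
      fix y assume y: "y \<in> Y'"
      have "real (degree V'' E'' y) = (\<Sum>x\<in>X'. of_bool (R x y))"
        unfolding degree_def degY[OF y] card_sum[OF fX'] ..
      thus "real (degree V'' E'' y) \<ge> d / (20 * log 2 (real (card V)))"
        using dY y by (simp add: t_def)
    qed
  qed
qed

end
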